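(* Let $f:X\to X$ be a nonuniformly expanding map with induced map $F=f^r:Y\to Y$, expansion constant $\lambda>1$, and $\operatorname{diam}(Y)\le1$. Let $v:X\to\mathbb{R}$ be $C^\eta$ with $\eta\in(0,1]$, and set $\theta=\lambda^{-\eta}$. Then: - $V_\omega\in F_\theta^{\rm loc}(Y)$ for all $\omega\in[0,2\pi]$; - there is a constant $C\ge1$ such that $D_\theta V_\omega(a)\le C|v|_\eta r(a)$ for all $\omega\in[0,2\pi]$ and $a\in\alpha$.
   Context: Nonuniformly expanding map: $(X,d)$ is a locally compact separable bounded metric space with Borel probability measure $m_0$, and $f:X\to X$ is nonsingular with $m_0$ ergodic. $Y\subset X$ is measurable with $m_0(Y)>0$, and $\alpha$ is an at most countable measurable partition of $Y$. $r:Y\to\mathbb{Z}^+$ is integrable and constant on each $a\in\alpha$ (value $r(a)$). There are constants $\lambda>1$, $\eta_0\in(0,1)$, $C_0\ge1$ such that for each $a\in\alpha$: (1) $F=f^{r(a)}:a\to Y$ is a measure-theoretic bijection; (2) $d(Fx,Fy)\ge\lambda d(x,y)$ for $x,y\in a$; (3) $d(f^\ell x,f^\ell y)\le C_0d(Fx,Fy)$ for $x,y\in a$ and $0\le\ell<r(a)$; (4) $g_a=d(m_0|_a\circ F^{-1})/dm_0|_Y$ satisfies $|\log g_a(x)-\log g_a(y)|\le C_0d(x,y)^{\eta_0}$ on $Y$. $d$ is rescaled so that $\operatorname{diam}(Y)\le1$. Symbolic metric: the $n$-cylinders are $\bigcap_{j=0}^{n-1}F^{-j}a_j$ with $a_j\in\alpha$.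 The separation time $s(x,y)$ is the least $n\ge0$ such that $x,y$ lie in distinct $n$-cylinders, and $d_\theta(x,y)=\theta^{s(x,y)}$. A function $\phi:Y\to\mathbb{C}$ is locally Lipschitz, written $\phi\in F_\theta^{\rm loc}(Y)$, if for each $a\in\alpha$, $D_\theta\phi(a)=\sup_{x,y\in a,x\ne y}|\phi(x)-\phi(y)|/d_\theta(x,y)<\infty$ and $\phi|_a$ is bounded. $|v|_\eta=\sup_{x\ne y}|v(x)-v(y)|/d(x,y)^\eta$. $V_\omega(y)=\sum_{\ell=0}^{r(y)-1}e^{i\ell\omega}v(f^\ell y)$. *)

theory Defs
  imports "HOL-Probability.Probability"
begin

definition induced_map :: "('a \<Rightarrow> 'a) \<Rightarrow> ('a \<Rightarrow> nat) \<Rightarrow> 'a \<Rightarrow> 'a" where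
  "induced_map f r y = (f ^^ r y) y"

definition mt_bijection :: "'a measure \<Rightarrow> ('a \<Rightarrow> 'a) \<Rightarrow> 'a set \<Rightarrow> 'a set \<Rightarrow> bool" where
  "mt_bijection M F a Y \<longleftrightarrow> F ` a \<subseteq> Y \<and>
     (\<exists>N \<in> null_sets M. \<exists>N' \<in> null_sets M. inj_on F (a - N) \<and> Y - F ` (a - N) \<subseteq> N')"

definition nonsingular :: "'a measure \<Rightarrow> ('a \<Rightarrow> 'a) \<Rightarrow> bool" where
  "nonsingular M f \<longleftrightarrow> f \<in> measurable M M \<and>
     (\<forall>A \<in> sets M. emeasure M (f -` A \<inter> space M) = 0 \<longleftrightarrow> emeasure M A = 0)"

definition ergodic :: "'a measure \<Rightarrow> ('a \<Rightarrow> 'a) \<Rightarrow> bool" where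
  "ergodic M f \<longleftrightarrow> (\<forall>A \<in> sets M. f -` A \<inter> space M = A \<longrightarrow>
     emeasure M A = 0 \<or> emeasure M (space M - A) = 0)"

definition nonuniformly_expanding ::
  "'a::metric_space set \<Rightarrow> 'a measure \<Rightarrow> ('a \<Rightarrow> 'a) \<Rightarrow> 'a set \<Rightarrow> 'a set set \<Rightarrow> ('a \<Rightarrow> nat)
     \<Rightarrow> real \<Rightarrow> real \<Rightarrow> real \<Rightarrow> bool" where
  "nonuniformly_expanding X m0 f Y \<alpha> r lam \<eta>0 C0 \<longleftrightarrow>
     \<comment> \<open>the space\<close>
     locally_compact_space (top_of_set X) \<and> separable_space (top_of_set X) \<and> bounded X \<and>
     \<comment> \<open>Borel probability measure\<close>
     space m0 = X \<and> sets m0 = sets (restrict_space borel X) \<and> prob_space m0 \<and>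
     \<comment> \<open>nonsingular ergodic map\<close>
     f ` X \<subseteq> X \<and> nonsingular m0 f \<and> ergodic m0 f \<and>
     \<comment> \<open>inducing set and partition\<close>
     Y \<subseteq> X \<and> Y \<in> sets m0 \<and> emeasure m0 Y > 0 \<and>
     countable \<alpha> \<and> \<alpha> \<subseteq> sets m0 \<and> {} \<notin> \<alpha> \<and> disjoint \<alpha> \<and> \<Union>\<alpha> = Y \<and>
     \<comment> \<open>return time\<close>
     (\<forall>y\<in>Y. r y \<ge> 1) \<and> integrable m0 (\<lambda>y. indicator Y y * real (r y)) \<and>
     (\<forall>a\<in>\<alpha>. \<forall>x\<in>a. \<forall>y\<in>a. r x = r y) \<and>
     \<comment> \<open>constants\<close>
     lam > 1 \<and> 0 < \<eta>0 \<and> \<eta>0 < 1 \<and> C0 \<ge> 1 \<and>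
     \<comment> \<open>conditions (1)-(4)\<close>
     (\<forall>a\<in>\<alpha>.
        mt_bijection m0 (induced_map f r) a Y \<and>
        (\<forall>x\<in>a. \<forall>y\<in>a. dist (induced_map f r x) (induced_map f r y) \<ge> lam * dist x y) \<and>
        (\<forall>x\<in>a. \<forall>y\<in>a. \<forall>l<r x. dist ((f ^^ l) x) ((f ^^ l) y)
              \<le> C0 * dist (induced_map f r x) (induced_map f r y)) \<and>
        (\<exists>g. g \<in> borel_measurable m0 \<and> (\<forall>y\<in>Y. g y > 0) \<and>
           distr (restrict_space m0 a) m0 (induced_map f r)
             = density m0 (\<lambda>y. ennreal (indicator Y y * g y)) \<and>
           (\<forall>x\<in>Y. \<forall>y\<in>Y. \<bar>ln (g x) - ln (g y)\<bar> \<le> C0 * dist x y powr \<eta>0)))"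

definition same_cylinder :: "'a set set \<Rightarrow> ('a \<Rightarrow> 'a) \<Rightarrow> nat \<Rightarrow> 'a \<Rightarrow> 'a \<Rightarrow> bool" where
  "same_cylinder \<alpha> F n x y \<longleftrightarrow> (\<forall>j<n. \<exists>a\<in>\<alpha>. (F ^^ j) x \<in> a \<and> (F ^^ j) y \<in> a)"

definition d_theta :: "real \<Rightarrow> 'a set set \<Rightarrow> ('a \<Rightarrow> 'a) \<Rightarrow> 'a \<Rightarrow> 'a \<Rightarrow> real" where
  "d_theta \<theta> \<alpha> F x y =
     (if \<exists>n. \<not> same_cylinder \<alpha> F n x y
      then \<theta> ^ (LEAST n. \<not> same_cylinder \<alpha> F n x y) else 0)"

text \<open>D_theta phi(a), valued in the extended reals (positive/0 = infinity).\<close>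
definition D_theta :: "real \<Rightarrow> 'a set set \<Rightarrow> ('a \<Rightarrow> 'a) \<Rightarrow> ('a \<Rightarrow> complex) \<Rightarrow> 'a set \<Rightarrow> ereal" where
  "D_theta \<theta> \<alpha> F \<phi> a =
     (SUP p \<in> {(x, y). x \<in> a \<and> y \<in> a \<and> x \<noteq> y}.
        ereal (cmod (\<phi> (fst p) - \<phi> (snd p))) / ereal (d_theta \<theta> \<alpha> F (fst p) (snd p)))"

definition F_theta_loc :: "real \<Rightarrow> 'a set set \<Rightarrow> ('a \<Rightarrow> 'a) \<Rightarrow> ('a \<Rightarrow> complex) set" where
  "F_theta_loc \<theta> \<alpha> F = {\<phi>. \<forall>a\<in>\<alpha>. D_theta \<theta> \<alpha> F \<phi> a < \<infinity> \<and> bounded (\<phi> ` a)}"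

definition holder_seminorm :: "'a::metric_space set \<Rightarrow> real \<Rightarrow> ('a \<Rightarrow> real) \<Rightarrow> ereal" where
  "holder_seminorm X \<eta> v =
     (SUP p \<in> {(x, y). x \<in> X \<and> y \<in> X \<and> x \<noteq> y}.
        ereal (\<bar>v (fst p) - v (snd p)\<bar> / dist (fst p) (snd p) powr \<eta>))"

definition V_omega :: "('a \<Rightarrow> 'a) \<Rightarrow> ('a \<Rightarrow> nat) \<Rightarrow> ('a \<Rightarrow> real) \<Rightarrow> real \<Rightarrow> 'a \<Rightarrow> complex" where
  "V_omega f r v \<omega> y = (\<Sum>l<r y. exp (\<i> * of_nat l * of_real \<omega>) * of_real (v ((f ^^ l) y)))"

end

theory Submission
  imports Defs
begin

lemma chain_gen:
  fixes F :: "'a::metric_space \<Rightarrow> 'a"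
  assumes ex: "\<And>a x y. a\<in>\<alpha> \<Longrightarrow> x\<in>a \<Longrightarrow> y\<in>a \<Longrightarrow> lam * dist x y \<le> dist (F x) (F y)"
    and lam: "0 \<le> lam"
    and sc: "\<And>j. k < j \<Longrightarrow> j \<le> k+m \<Longrightarrow> \<exists>a\<in>\<alpha>. (F^^j) x \<in> a \<and> (F^^j) y \<in> a"
  shows "lam^m * dist ((F^^(Suc k)) x) ((F^^(Suc k)) y)
           \<le> dist ((F^^(Suc (k+m))) x) ((F^^(Suc (k+m))) y)"
  using sc
proof (induction m arbitrary: k)
  case 0 then show ?case by simp
next
  case (Suc m)
  obtain a where a: "a\<in>\<alpha>" "(F^^Suc k) x \<in> a" "(F^^Suc k) y \<in> a"
    using Suc.prems[of "Suc k"] by auto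
  have 1: "lam * dist ((F^^Suc k) x) ((F^^Suc k) y) \<le> dist ((F^^Suc (Suc k)) x) ((F^^Suc (Suc k)) y)"
    using ex[OF a] by simp
  have 2: "lam^m * dist ((F^^Suc (Suc k)) x) ((F^^Suc (Suc k)) y)
      \<le> dist ((F^^Suc (Suc k + m)) x) ((F^^Suc (Suc k+m)) y)"
    using Suc.IH[of "Suc k"] Suc.prems by auto
  have "lam^Suc m * dist ((F^^Suc k) x) ((F^^Suc k) y)
        = lam^m * (lam * dist ((F^^Suc k) x) ((F^^Suc k) y))" by (simp add: algebra_simps)
  also have "\<dots> \<le> lam^m * dist ((F^^Suc (Suc k)) x) ((F^^Suc (Suc k)) y)"
    using 1 by (simp add: mult_left_mono lam)
  also have "\<dots> \<le> dist ((F^^Suc (Suc k + m)) x) ((F^^Suc (Suc k+m)) y)" using 2 .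
  finally show ?case by simp
qed

lemma holder_bound:
  assumes h: "holder_seminorm X \<eta> v < \<infinity>" and p: "p\<in>X" and q: "q\<in>X"
  shows "\<bar>v p - v q\<bar> \<le> real_of_ereal (holder_seminorm X \<eta> v) * dist p q powr \<eta>"
proof (cases "p = q")
  case True then show ?thesis by simp
next
  case False
  define t where "t = \<bar>v p - v q\<bar> / dist p q powr \<eta>"
  have "ereal t \<le> holder_seminorm X \<eta> v"
    unfolding holder_seminorm_def t_def
    by (rule SUP_upper2[of "(p,q)"]) (use p q False in auto)
  with h have "t \<le> real_of_ereal (holder_seminorm X \<eta> v)"
    by (cases "holder_seminorm X \<eta> v") auto
  moreover have "dist p q powr \<eta> > 0" using False by simp
  ultimately show ?thesis unfolding t_def by (simp add: divide_le_eq)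
qed

lemma holder_nonneg:
  assumes h: "holder_seminorm X \<eta> v < \<infinity>"
  shows "0 \<le> real_of_ereal (holder_seminorm X \<eta> v)"
proof (cases "{(x, y). x \<in> X \<and> y \<in> X \<and> x \<noteq> y} = {}")
  case True then show ?thesis unfolding holder_seminorm_def True by (simp add: bot_ereal_def)
next
  case False
  then obtain p q where pq: "p\<in>X" "q\<in>X" "p\<noteq>q" by auto
  define t where "t = \<bar>v p - v q\<bar> / dist p q powr \<eta>"
  have "ereal t \<le> holder_seminorm X \<eta> v"
    unfolding holder_seminorm_def t_def
    by (rule SUP_upper2[of "(p,q)"]) (use pq in auto)
  with h have "t \<le> real_of_ereal (holder_seminorm X \<eta> v)"
    by (cases "holder_seminorm X \<eta> v") auto
  moreover have "0 \<le> t" unfolding t_def by simp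
  ultimately show ?thesis by simp
qed


theorem proposition3p3:
  fixes X :: "'a::metric_space set" and m0 :: "'a measure" and f :: "'a \<Rightarrow> 'a"
    and Y :: "'a set" and \<alpha> :: "'a set set" and r :: "'a \<Rightarrow> nat"
    and lam \<eta>0 C0 \<eta> \<theta> :: real and v :: "'a \<Rightarrow> real"
  assumes nue: "nonuniformly_expanding X m0 f Y \<alpha> r lam \<eta>0 C0"
    and diamY: "diameter Y \<le> 1"
    and eta: "0 < \<eta>" "\<eta> \<le> 1"
    and holder: "holder_seminorm X \<eta> v < \<infinity>"
    and theta: "\<theta> = lam powr (- \<eta>)"
  shows "(\<forall>\<omega>\<in>{0..2*pi}. V_omega f r v \<omega> \<in> F_theta_loc \<theta> \<alpha> (induced_map f r))
       \<and> (\<exists>C\<ge>1. \<forall>\<omega>\<in>{0..2*pi}. \<forall>a\<in>\<alpha>. \<forall>y\<in>a.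
            D_theta \<theta> \<alpha> (induced_map f r) (V_omega f r v \<omega>) a
              \<le> ereal (C * real_of_ereal (holder_seminorm X \<eta> v) * real (r y)))"
proof -
  define F where "F = induced_map f r"
  define H where "H = real_of_ereal (holder_seminorm X \<eta> v)"
  define K where "K = C0 powr \<eta> / \<theta>^2"
  note N = nue[unfolded nonuniformly_expanding_def]
  have bX: "bounded X" using N by (elim conjE) assumption
  have YX: "Y \<subseteq> X" using N by (elim conjE) assumption
  have fX: "f ` X \<subseteq> X" using N by (elim conjE) assumption
  have aY: "\<Union>\<alpha> = Y" using N by (elim conjE) assumption
  have ne: "{} \<notin> \<alpha>" using N by (elim conjE) assumption
  have rc: "\<forall>a\<in>\<alpha>. \<forall>x\<in>a. \<forall>y\<in>a. r x = r y" using N by (elim conjE) assumption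
  have lam1: "lam > 1" using N by (elim conjE) assumption
  have C01: "C0 \<ge> 1" using N by (elim conjE) assumption
  have atomall: "\<forall>a\<in>\<alpha>.
        mt_bijection m0 (induced_map f r) a Y \<and>
        (\<forall>x\<in>a. \<forall>y\<in>a. dist (induced_map f r x) (induced_map f r y) \<ge> lam * dist x y) \<and>
        (\<forall>x\<in>a. \<forall>y\<in>a. \<forall>l<r x. dist ((f ^^ l) x) ((f ^^ l) y)
              \<le> C0 * dist (induced_map f r x) (induced_map f r y)) \<and>
        (\<exists>g. g \<in> borel_measurable m0 \<and> (\<forall>y\<in>Y. g y > 0) \<and>
           distr (restrict_space m0 a) m0 (induced_map f r)
             = density m0 (\<lambda>y. ennreal (indicator Y y * g y)) \<and>
           (\<forall>x\<in>Y. \<forall>y\<in>Y. \<bar>ln (g x) - ln (g y)\<bar> \<le> C0 * dist x y powr \<eta>0))"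
    using N by (elim conjE) assumption
  have atom: "\<forall>a\<in>\<alpha>. mt_bijection m0 (induced_map f r) a Y \<and>
        (\<forall>x\<in>a. \<forall>y\<in>a. dist (induced_map f r x) (induced_map f r y) \<ge> lam * dist x y) \<and>
        (\<forall>x\<in>a. \<forall>y\<in>a. \<forall>l<r x. dist ((f ^^ l) x) ((f ^^ l) y)
              \<le> C0 * dist (induced_map f r x) (induced_map f r y))"
    using atomall by blast
  have FY: "\<And>a x. a\<in>\<alpha> \<Longrightarrow> x\<in>a \<Longrightarrow> F x \<in> Y"
  proof -
    fix a x assume a: "a\<in>\<alpha>" and x: "x\<in>a"
    have "mt_bijection m0 (induced_map f r) a Y" using atom a by blast
    then have "induced_map f r ` a \<subseteq> Y" unfolding mt_bijection_def by (elim conjE) assumption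
    then show "F x \<in> Y" using x unfolding F_def by blast
  qed
  have ex: "\<And>a x y. a\<in>\<alpha> \<Longrightarrow> x\<in>a \<Longrightarrow> y\<in>a \<Longrightarrow> lam * dist x y \<le> dist (F x) (F y)"
    using atom unfolding F_def by blast
  have c3: "\<And>a x y l. a\<in>\<alpha> \<Longrightarrow> x\<in>a \<Longrightarrow> y\<in>a \<Longrightarrow> l < r x \<Longrightarrow>
      dist ((f ^^ l) x) ((f ^^ l) y) \<le> C0 * dist (F x) (F y)"
    using atom unfolding F_def by blast
  have aYs: "\<And>a. a\<in>\<alpha> \<Longrightarrow> a \<subseteq> Y" using aY by blast
  have Hb: "\<And>p q. p\<in>X \<Longrightarrow> q\<in>X \<Longrightarrow> \<bar>v p - v q\<bar> \<le> H * dist p q powr \<eta>"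
    unfolding H_def using holder_bound[OF holder] by blast
  have H0: "0 \<le> H" unfolding H_def using holder_nonneg[OF holder] .
  have th0: "0 < \<theta>" using theta lam1 by simp
  have th1: "\<theta> < 1" using theta lam1 eta by (simp add: powr_less_one)
  have K1: "1 \<le> K"
  proof -
    have "1 \<le> C0 powr \<eta>" using C01 eta by (simp add: ge_one_powr_ge_zero)
    moreover have "\<theta>^2 \<le> 1" "0 < \<theta>^2" using th0 th1 by (auto simp: power_le_one)
    ultimately show ?thesis unfolding K_def by (simp add: le_divide_eq)
  qed
  have dY: "\<And>p q. p\<in>Y \<Longrightarrow> q\<in>Y \<Longrightarrow> dist p q \<le> 1"
    using diameter_bounded_bound[OF bounded_subset[OF bX YX]] diamY by (meson order_trans)
  have fl: "\<And>l x. x\<in>X \<Longrightarrow> (f^^l) x \<in> X"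
  proof -
    fix l x assume "x \<in> X" then show "(f^^l) x \<in> X" by (induction l) (use fX in auto)
  qed
  have chain: "\<And>n x y. same_cylinder \<alpha> F (n+1) x y \<Longrightarrow> lam^n * dist (F x) (F y) \<le> 1"
  proof -
    fix n x y assume sc: "same_cylinder \<alpha> F (n+1) x y"
    have "lam^n * dist ((F^^(Suc 0)) x) ((F^^(Suc 0)) y)
           \<le> dist ((F^^(Suc (0+n))) x) ((F^^(Suc (0+n))) y)"
      by (rule chain_gen[where \<alpha>=\<alpha>]) (use ex lam1 sc in \<open>auto simp: same_cylinder_def\<close>)
    moreover obtain a where a: "a\<in>\<alpha>" "(F^^n) x \<in> a" "(F^^n) y \<in> a"
      using sc unfolding same_cylinder_def by auto
    have "dist ((F^^(Suc n)) x) ((F^^(Suc n)) y) \<le> 1"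
      using FY[OF a(1,2)] FY[OF a(1,3)] dY by simp
    ultimately show "lam^n * dist (F x) (F y) \<le> 1" by simp
  qed
  have key: "\<And>a x y \<omega>. a\<in>\<alpha> \<Longrightarrow> x\<in>a \<Longrightarrow> y\<in>a \<Longrightarrow>
     cmod (V_omega f r v \<omega> x - V_omega f r v \<omega> y) \<le> K*H*real(r x) * d_theta \<theta> \<alpha> F x y"
  proof -
    fix a x y \<omega> assume a: "a\<in>\<alpha>" and x: "x\<in>a" and y: "y\<in>a"
    have rxy: "r y = r x" using rc a x y by metis
    have xX: "x \<in> X" "y \<in> X" using aYs[OF a] x y YX by auto
    have Vd: "V_omega f r v \<omega> x - V_omega f r v \<omega> y =
       (\<Sum>l<r x. exp (\<i> * of_nat l * of_real \<omega>) * of_real (v ((f ^^ l) x) - v ((f ^^ l) y)))"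
      unfolding V_omega_def rxy by (simp add: sum_subtractf algebra_simps)
    have Vn: "cmod (V_omega f r v \<omega> x - V_omega f r v \<omega> y) \<le>
       (\<Sum>l<r x. \<bar>v ((f ^^ l) x) - v ((f ^^ l) y)\<bar>)"
      unfolding Vd
      by (rule order_trans[OF norm_sum]) (simp add: norm_mult norm_exp_eq_Re flip: of_real_diff)
    show "cmod (V_omega f r v \<omega> x - V_omega f r v \<omega> y) \<le> K*H*real(r x) * d_theta \<theta> \<alpha> F x y"
    proof (cases "\<exists>n. \<not> same_cylinder \<alpha> F n x y")
      case True
      define s where "s = (LEAST n. \<not> same_cylinder \<alpha> F n x y)"
      have ns: "\<not> same_cylinder \<alpha> F s x y" unfolding s_def using True by (metis LeastI_ex)
      have sc0: "same_cylinder \<alpha> F 0 x y" and sc1: "same_cylinder \<alpha> F 1 x y"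
        using a x y by (auto simp: same_cylinder_def)
      have "s \<noteq> 0" using ns sc0 by metis
      have "s \<noteq> 1" using ns sc1 by metis
      define n where "n = s - 2"
      have sn: "s = n + 2" using \<open>s \<noteq> 0\<close> \<open>s \<noteq> 1\<close> unfolding n_def by arith
      have "same_cylinder \<alpha> F (n+1) x y" using not_less_Least[of "n+1" "\<lambda>n. \<not> same_cylinder \<alpha> F n x y"] sn s_def by auto
      then have ch: "lam^n * dist (F x) (F y) \<le> 1" by (rule chain)
      define D where "D = dist (F x) (F y)"
      have lp: "lam powr (- real n) = 1 / lam^n" using lam1
        by (simp add: powr_minus_divide powr_realpow)
      have D: "D \<le> lam powr (- real n)" unfolding lp using ch lam1
        by (simp add: D_def le_divide_eq mult.commute)
      have Dp: "D powr \<eta> \<le> \<theta>^n"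
      proof -
        have "D powr \<eta> \<le> (lam powr (- real n)) powr \<eta>"
          using D eta by (intro powr_mono2) (auto simp: D_def)
        also have "\<dots> = lam powr (- \<eta> * real n)" by (simp add: powr_powr mult.commute)
        also have "\<dots> = \<theta> powr real n" using theta by (simp add: powr_powr)
        also have "\<dots> = \<theta>^n" using th0 by (simp add: powr_realpow)
        finally show ?thesis .
      qed
      have tm: "\<bar>v ((f ^^ l) x) - v ((f ^^ l) y)\<bar> \<le> H * C0 powr \<eta> * \<theta>^n" if l: "l < r x" for l
      proof -
        have "\<bar>v ((f ^^ l) x) - v ((f ^^ l) y)\<bar> \<le> H * dist ((f ^^ l) x) ((f ^^ l) y) powr \<eta>"
          using Hb[OF fl[OF xX(1)] fl[OF xX(2)]] .
        also have "\<dots> \<le> H * (C0 * D) powr \<eta>"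
          using c3[OF a x y l] eta H0 by (intro mult_left_mono powr_mono2) (auto simp: D_def)
        also have "\<dots> = H * C0 powr \<eta> * D powr \<eta>" using C01
          by (simp add: powr_mult D_def)
        also have "\<dots> \<le> H * C0 powr \<eta> * \<theta>^n" using Dp H0 by (intro mult_left_mono) auto
        finally show ?thesis .
      qed
      have "cmod (V_omega f r v \<omega> x - V_omega f r v \<omega> y) \<le> real (r x) * (H * C0 powr \<eta> * \<theta>^n)"
        using order_trans[OF Vn sum_mono[OF tm]] by simp
      also have "\<dots> = K*H*real(r x) * \<theta>^s" using th0 unfolding K_def sn
        by (simp add: power_add power2_eq_square field_simps)
      also have "\<theta>^s = d_theta \<theta> \<alpha> F x y" unfolding d_theta_def s_def using True by simp
      finally show ?thesis .
    next
      case False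
      have all: "\<forall>n. lam^n * dist (F x) (F y) \<le> 1" using False chain by blast
      have "dist (F x) (F y) = 0"
      proof (rule ccontr)
        assume "dist (F x) (F y) \<noteq> 0"
        then have Dp: "dist (F x) (F y) > 0" by simp
        obtain n where "1 / dist (F x) (F y) < lam^n" using real_arch_pow[OF lam1] by blast
        then have "1 < lam^n * dist (F x) (F y)" using Dp by (simp add: divide_less_eq)
        then show False using all by (meson not_le)
      qed
      then have "dist ((f ^^ l) x) ((f ^^ l) y) = 0" if "l < r x" for l
        using c3[OF a x y that] by simp
      then have "cmod (V_omega f r v \<omega> x - V_omega f r v \<omega> y) = 0" using Vn by simp
      then show ?thesis unfolding d_theta_def using False by simp
    qed
  qed
  have dle: "\<And>x y. 0 \<le> d_theta \<theta> \<alpha> F x y \<and> d_theta \<theta> \<alpha> F x y \<le> 1"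
    unfolding d_theta_def using th0 th1 by (auto simp: power_le_one)
  have KH0: "0 \<le> K*H" using K1 H0 by simp
  have Dle: "\<And>a y \<omega>. a\<in>\<alpha> \<Longrightarrow> y\<in>a \<Longrightarrow> D_theta \<theta> \<alpha> F (V_omega f r v \<omega>) a \<le> ereal (K*H*real(r y))"
  proof -
    fix a y \<omega> assume a: "a\<in>\<alpha>" and y: "y\<in>a"
    show "D_theta \<theta> \<alpha> F (V_omega f r v \<omega>) a \<le> ereal (K*H*real(r y))"
      unfolding D_theta_def
    proof (rule SUP_least)
      fix p assume "p \<in> {(x, y). x \<in> a \<and> y \<in> a \<and> x \<noteq> y}"
      then obtain x z where p: "p = (x,z)" and x: "x\<in>a" and z: "z\<in>a" by blast
      let ?c = "cmod (V_omega f r v \<omega> x - V_omega f r v \<omega> z)"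
      let ?d = "d_theta \<theta> \<alpha> F x z"
      have rxy: "r x = r y" using rc a x y by blast
      have c: "?c \<le> K*H*real(r y) * ?d" using key[OF a x z] unfolding rxy .
      have B: "0 \<le> K*H*real(r y)" using KH0 by simp
      have "ereal ?c / ereal ?d \<le> ereal (K*H*real(r y))"
      proof (cases "?d = 0")
        case True then have "?c \<le> 0" using c by simp
        then have "?c = 0" using norm_ge_zero order_antisym by blast
        then show ?thesis using True B by (simp add: zero_ereal_def[symmetric])
      next
        case False then have "0 < ?d" using dle[of x z] by simp
        then show ?thesis using c False by (simp add: divide_le_eq)
      qed
      then show "ereal (cmod (V_omega f r v \<omega> (fst p) - V_omega f r v \<omega> (snd p))) /
          ereal (d_theta \<theta> \<alpha> F (fst p) (snd p)) \<le> ereal (K*H*real(r y))"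
        unfolding p by simp
    qed
  qed
  have bdd: "\<And>a \<omega>. a\<in>\<alpha> \<Longrightarrow> bounded (V_omega f r v \<omega> ` a)"
  proof -
    fix a \<omega> assume a: "a\<in>\<alpha>"
    then obtain y0 where y0: "y0 \<in> a" using ne by (metis all_not_in_conv)
    show "bounded (V_omega f r v \<omega> ` a)" unfolding bounded_iff
    proof (intro exI[of _ "cmod (V_omega f r v \<omega> y0) + K*H*real(r y0)"] ballI)
      fix w assume "w \<in> V_omega f r v \<omega> ` a"
      then obtain y where y: "y\<in>a" and w: "w = V_omega f r v \<omega> y" by blast
      have "cmod (V_omega f r v \<omega> y - V_omega f r v \<omega> y0) \<le> K*H*real(r y) * d_theta \<theta> \<alpha> F y y0"
        using key[OF a y y0] .
      also have "\<dots> \<le> K*H*real(r y0)"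
      proof -
        have e: "r y = r y0" using rc a y y0 by blast
        have "0 \<le> K*H*real(r y0)" using KH0 by simp
        then show ?thesis unfolding e using dle[of y y0] mult_right_le_one_le by blast
      qed
      finally have "cmod (V_omega f r v \<omega> y - V_omega f r v \<omega> y0) \<le> K*H*real(r y0)" .
      moreover have "cmod (V_omega f r v \<omega> y) \<le> cmod (V_omega f r v \<omega> y0) + cmod (V_omega f r v \<omega> y - V_omega f r v \<omega> y0)"
        by (rule norm_triangle_sub)
      ultimately show "norm w \<le> cmod (V_omega f r v \<omega> y0) + K*H*real(r y0)"
        unfolding w by linarith
    qed
  qed
  show ?thesis
  proof
    show "\<forall>\<omega>\<in>{0..2*pi}. V_omega f r v \<omega> \<in> F_theta_loc \<theta> \<alpha> (induced_map f r)"
    proof (intro ballI)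
      fix \<omega> :: real
      show "V_omega f r v \<omega> \<in> F_theta_loc \<theta> \<alpha> (induced_map f r)"
        unfolding F_theta_loc_def F_def[symmetric]
      proof (intro CollectI ballI conjI)
        fix a assume a: "a\<in>\<alpha>"
        then obtain y0 where y0: "y0 \<in> a" using ne by (metis all_not_in_conv)
        show "D_theta \<theta> \<alpha> F (V_omega f r v \<omega>) a < \<infinity>"
          using Dle[OF a y0] by (rule order_le_less_trans) simp
        show "bounded (V_omega f r v \<omega> ` a)" using bdd[OF a] .
      qed
    qed
    show "\<exists>C\<ge>1. \<forall>\<omega>\<in>{0..2*pi}. \<forall>a\<in>\<alpha>. \<forall>y\<in>a.
            D_theta \<theta> \<alpha> (induced_map f r) (V_omega f r v \<omega>) a
              \<le> ereal (C * real_of_ereal (holder_seminorm X \<eta> v) * real (r y))"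
      using K1 Dle unfolding F_def H_def by blast
  qed
qed

end
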